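(* Let $N_1,\dots,N_d$ be positive integers, $\Omega=[N_1]\times\cdots\times[N_d]$, $X\subseteq\Omega$, and let $b:\mathbb{N}\to(0,\infty)$ be a function. If $\chi:X\to\{-1,0,1\}$ is a partial coloring of $X$ such that $|\chi(S)|\le b(|S|)$ for all $S\in\mathcal{C}_X$, then \[ |\chi(A)|\le 2\sum_{s:\,s=2^t}b(s) \] for all $A\in\mathcal{A}_X$, where the sum is over all powers of $2$ ($t=0,1,2,\dots$).
   Context: $[N]=\{1,\dots,N\}$. An arithmetic progression in $d$ dimensions is a set $\{\mathbf{a}+i\mathbf{b}: i=0,\dots,l-1\}$ with $\mathbf{a},\mathbf{b}\in\mathbb{Z}^d$, $\mathbf{b}\ne\mathbf{0}$, $l\in\mathbb{N}$; $\mathcal{A}_{\mathbf{N}}$ is the family of such progressions contained in $\Omega$, and $\mathcal{A}_X=\{A\cap X: A\in\mathcal{A}_{\mathbf{N}}\}$. For $\mathbf{b}\in\mathbb{Z}^d\setminus\{\mathbf{0}\}$, points $\mathbf{x},\mathbf{x}'$ are congruent mod $\mathbf{b}$ if $\mathbf{x}-\mathbf{x}'\in\mathbb{Z}\mathbf{b}$. For each $\mathbf{b}\ne\mathbf{0}$ and each congruence class $I$ of $X$ modulo $\mathbf{b}$ (i.e. the set of elements of $X$ congruent to a given point), list $I=\{\mathbf{x}_1,\dots,\mathbf{x}_l\}$ in increasing order of the dot product $\mathbf{x}_u\cdot\mathbf{b}$ (these are distinct). $\mathcal{C}_X$ is the collection, over all such $(\mathbf{b},I)$, of all sets $\{\mathbf{x}_u:(j-1)s+1\le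 u\le js\}$ where $s=2^t$ ($t\ge0$ an integer) and $1\le j\le\lfloor l/s\rfloor$. For $A\subseteq X$, $\chi(A)=\sum_{x\in A}\chi(x)$. *)

theory Defs
  imports "HOL-Analysis.Analysis"
begin

definition dotz :: "int^'d::finite \<Rightarrow> int^'d \<Rightarrow> int" where
  "dotz x y = (\<Sum>i\<in>UNIV. x$i * y$i)"

definition box :: "('d::finite \<Rightarrow> nat) \<Rightarrow> (int^'d) set" where
  "box N = {x. \<forall>i. 1 \<le> x$i \<and> x$i \<le> int (N i)}"

definition APs :: "('d::finite \<Rightarrow> nat) \<Rightarrow> (int^'d) set set" where
  "APs N = {A. \<exists>a b (l::nat). b \<noteq> 0 \<and> A = (\<lambda>i. a + int i *s b) ` {..<l} \<and> A \<subseteq> box N}"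

definition AX :: "('d::finite \<Rightarrow> nat) \<Rightarrow> (int^'d) set \<Rightarrow> (int^'d) set set" where
  "AX N X = (\<lambda>A. A \<inter> X) ` APs N"

definition cong_mod :: "int^'d::finite \<Rightarrow> int^'d \<Rightarrow> int^'d \<Rightarrow> bool" where
  "cong_mod b x x' \<longleftrightarrow> (\<exists>k::int. x - x' = k *s b)"

definition cong_class :: "(int^'d::finite) set \<Rightarrow> int^'d \<Rightarrow> int^'d \<Rightarrow> (int^'d) set" where
  "cong_class X b x = {x' \<in> X. cong_mod b x x'}"

text \<open>The u-th element (1-indexed) is xs ! (u-1), so the block
  {x_u : (j-1)s+1 <= u <= js} is set (take s (drop ((j-1)s) xs)).\<close>
definition CX :: "(int^'d::finite) set \<Rightarrow> (int^'d) set set" where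
  "CX X = {S. \<exists>b x xs (t::nat) (j::nat). b \<noteq> 0 \<and> x \<in> X \<and>
       distinct xs \<and> set xs = cong_class X b x \<and>
       sorted_wrt (\<lambda>u v. dotz u b < dotz v b) xs \<and>
       1 \<le> j \<and> j \<le> length xs div 2^t \<and>
       S = set (take (2^t) (drop ((j - 1) * 2^t) xs))}"

end

theory Submission
  imports Defs
begin


lemma suffix_strict:
  fixes g :: "nat \<Rightarrow> real" and B :: "nat \<Rightarrow> real"
  assumes blk: "\<And>t j. (j+1)*2^t \<le> L \<Longrightarrow> \<bar>\<Sum>u\<in>{j*2^t..<(j+1)*2^t}. g u\<bar> \<le> B t"
    and Bnn: "\<And>t. 0 \<le> B t"
  shows "(2::nat)^T dvd q \<Longrightarrow> p \<le> q \<Longrightarrow> q - p < 2^T \<Longrightarrow> q \<le> L \<Longrightarrow>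
    \<bar>\<Sum>u\<in>{p..<q}. g u\<bar> \<le> (\<Sum>t<T. B t)"
proof (induction T arbitrary: p q)
  case 0
  then show ?case by simp
next
  case (Suc T)
  have dq: "(2::nat)^T dvd q" using Suc.prems(1) by (metis dvd_power_le le_add2 plus_1_eq_Suc dvd_trans le_imp_power_dvd)
  show ?case
  proof (cases "q - p < 2^T")
    case True
    then have "\<bar>\<Sum>u\<in>{p..<q}. g u\<bar> \<le> (\<Sum>t<T. B t)" using Suc dq by blast
    then show ?thesis using Bnn[of T] by simp
  next
    case False
    define mid where "mid = q - 2^T"
    have pm: "p \<le> mid" "mid \<le> q" using False mid_def Suc.prems by auto
    have dm: "(2::nat)^T dvd mid" unfolding mid_def using dq by (simp add: dvd_diff_nat)
    then obtain j where j: "mid = j*2^T" by (metis dvd_def mult.commute)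
    have qj: "q = (j+1)*2^T" using j mid_def False by (simp add: algebra_simps)
    have b1: "\<bar>\<Sum>u\<in>{mid..<q}. g u\<bar> \<le> B T" using blk[of j T] j qj Suc.prems by simp
    have b2: "\<bar>\<Sum>u\<in>{p..<mid}. g u\<bar> \<le> (\<Sum>t<T. B t)"
      using Suc.IH[of mid p] dm pm Suc.prems mid_def by auto
    have "(\<Sum>u\<in>{p..<q}. g u) = (\<Sum>u\<in>{p..<mid}. g u) + (\<Sum>u\<in>{mid..<q}. g u)"
      using pm by (simp add: sum.atLeastLessThan_concat)
    then show ?thesis using b1 b2 by simp
  qed
qed

lemma prefix_strict:
  fixes g :: "nat \<Rightarrow> real" and B :: "nat \<Rightarrow> real"
  assumes blk: "\<And>t j. (j+1)*2^t \<le> L \<Longrightarrow> \<bar>\<Sum>u\<in>{j*2^t..<(j+1)*2^t}. g u\<bar> \<le> B t"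
    and Bnn: "\<And>t. 0 \<le> B t"
  shows "(2::nat)^T dvd p \<Longrightarrow> p \<le> q \<Longrightarrow> q - p < 2^T \<Longrightarrow> q \<le> L \<Longrightarrow>
    \<bar>\<Sum>u\<in>{p..<q}. g u\<bar> \<le> (\<Sum>t<T. B t)"
proof (induction T arbitrary: p q)
  case 0
  then show ?case by simp
next
  case (Suc T)
  have dp: "(2::nat)^T dvd p" using Suc.prems(1) by (metis dvd_power_le le_add2 plus_1_eq_Suc dvd_trans le_imp_power_dvd)
  show ?case
  proof (cases "q - p < 2^T")
    case True
    then have "\<bar>\<Sum>u\<in>{p..<q}. g u\<bar> \<le> (\<Sum>t<T. B t)" using Suc dp by blast
    then show ?thesis using Bnn[of T] by simp
  next
    case False
    define mid where "mid = p + 2^T"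
    have pm: "p \<le> mid" "mid \<le> q" using False mid_def Suc.prems by auto
    have dm: "(2::nat)^T dvd mid" unfolding mid_def using dp by simp
    obtain j where j: "p = j*2^T" using dp by (metis dvd_def mult.commute)
    have qj: "mid = (j+1)*2^T" using j mid_def by (simp add: algebra_simps)
    have b1: "\<bar>\<Sum>u\<in>{p..<mid}. g u\<bar> \<le> B T" using blk[of j T] j qj Suc.prems pm by simp
    have b2: "\<bar>\<Sum>u\<in>{mid..<q}. g u\<bar> \<le> (\<Sum>t<T. B t)"
      using Suc.IH[of mid q] dm pm Suc.prems mid_def by auto
    have "(\<Sum>u\<in>{p..<q}. g u) = (\<Sum>u\<in>{p..<mid}. g u) + (\<Sum>u\<in>{mid..<q}. g u)"
      using pm by (simp add: sum.atLeastLessThan_concat)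
    then show ?thesis using b1 b2 by simp
  qed
qed

lemma suffix_weak:
  fixes g :: "nat \<Rightarrow> real" and B :: "nat \<Rightarrow> real"
  assumes blk: "\<And>t j. (j+1)*2^t \<le> L \<Longrightarrow> \<bar>\<Sum>u\<in>{j*2^t..<(j+1)*2^t}. g u\<bar> \<le> B t"
    and Bnn: "\<And>t. 0 \<le> B t"
    and "(2::nat)^T dvd q" "p \<le> q" "q - p \<le> 2^T" "q \<le> L"
  shows "\<bar>\<Sum>u\<in>{p..<q}. g u\<bar> \<le> (\<Sum>t<Suc T. B t)"
proof (cases "q - p < 2^T")
  case True
  have "\<bar>\<Sum>u\<in>{p..<q}. g u\<bar> \<le> (\<Sum>t<T. B t)"
    using suffix_strict[where L=L and g=g and B=B and T=T and q=q and p=p, OF blk Bnn] assms True by simp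
  then show ?thesis using Bnn[of T] by simp
next
  case False
  obtain m where m: "q = m*2^T" using assms(3) by (metis dvd_def mult.commute)
  have "m \<noteq> 0" proof assume "m = 0" then show False using m False by simp qed
  then obtain j where "m = j+1" by (metis Suc_eq_plus1 not0_implies_Suc)
  then have j: "q = (j+1)*2^T" using m by simp
  have "p = j*2^T" using j False assms by (simp add: algebra_simps)
  then have "\<bar>\<Sum>u\<in>{p..<q}. g u\<bar> \<le> B T" using blk[of j T] j assms by simp
  moreover have "0 \<le> (\<Sum>t<T. B t)" using Bnn by (simp add: sum_nonneg)
  ultimately show ?thesis by simp
qed

lemma prefix_weak:
  fixes g :: "nat \<Rightarrow> real" and B :: "nat \<Rightarrow> real"
  assumes blk: "\<And>t j. (j+1)*2^t \<le> L \<Longrightarrow> \<bar>\<Sum>u\<in>{j*2^t..<(j+1)*2^t}. g u\<bar> \<le> B t"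
    and Bnn: "\<And>t. 0 \<le> B t"
    and "(2::nat)^T dvd p" "p \<le> q" "q - p \<le> 2^T" "q \<le> L"
  shows "\<bar>\<Sum>u\<in>{p..<q}. g u\<bar> \<le> (\<Sum>t<Suc T. B t)"
proof (cases "q - p < 2^T")
  case True
  have "\<bar>\<Sum>u\<in>{p..<q}. g u\<bar> \<le> (\<Sum>t<T. B t)"
    using prefix_strict[where L=L and g=g and B=B and T=T and q=q and p=p, OF blk Bnn] assms True by simp
  then show ?thesis using Bnn[of T] by simp
next
  case False
  obtain j where j: "p = j*2^T" using assms(3) by (metis dvd_def mult.commute)
  have "q = (j+1)*2^T" using j False assms by (simp add: algebra_simps)
  then have "\<bar>\<Sum>u\<in>{p..<q}. g u\<bar> \<le> B T" using blk[of j T] j assms by simp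
  moreover have "0 \<le> (\<Sum>t<T. B t)" using Bnn by (simp add: sum_nonneg)
  ultimately show ?thesis by simp
qed

lemma gen_window:
  fixes g :: "nat \<Rightarrow> real" and B :: "nat \<Rightarrow> real"
  assumes blk: "\<And>t j. (j+1)*2^t \<le> L \<Longrightarrow> \<bar>\<Sum>u\<in>{j*2^t..<(j+1)*2^t}. g u\<bar> \<le> B t"
    and Bnn: "\<And>t. 0 \<le> B t"
  shows "j*2^T \<le> p \<Longrightarrow> p \<le> q \<Longrightarrow> q \<le> (j+1)*(2::nat)^T \<Longrightarrow> q \<le> L \<Longrightarrow>
    \<bar>\<Sum>u\<in>{p..<q}. g u\<bar> \<le> 2 * (\<Sum>t<Suc T. B t)"
proof (induction T arbitrary: j p q)
  case 0
  have "\<bar>\<Sum>u\<in>{p..<q}. g u\<bar> \<le> (\<Sum>t<Suc 0. B t)"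
    using suffix_weak[where L=L and g=g and B=B and T=0 and q=q and p=p, OF blk Bnn] 0 by simp
  then show ?case using Bnn[of 0] by simp
next
  case (Suc T)
  define mid where "mid = (2*j+1)*2^T"
  have e1: "j*2^Suc T = (2*j)*2^T" "(j+1)*2^Suc T = (2*j+1+1)*2^T" by (simp_all add: algebra_simps)
  have mono: "2 * (\<Sum>t<Suc T. B t) \<le> 2 * (\<Sum>t<Suc (Suc T). B t)" using Bnn[of "Suc T"] by simp
  consider "q \<le> mid" | "mid \<le> p" | "p < mid \<and> mid < q" by linarith
  then show ?case
  proof cases
    case 1
    then have "\<bar>\<Sum>u\<in>{p..<q}. g u\<bar> \<le> 2 * (\<Sum>t<Suc T. B t)"
      using Suc.IH[of "2*j" p q] Suc.prems e1 mid_def by simp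
    then show ?thesis using mono by linarith
  next
    case 2
    then have "\<bar>\<Sum>u\<in>{p..<q}. g u\<bar> \<le> 2 * (\<Sum>t<Suc T. B t)"
      using Suc.IH[of "2*j+1" p q] Suc.prems e1 mid_def by simp
    then show ?thesis using mono by linarith
  next
    case 3
    have dm: "(2::nat)^T dvd mid" unfolding mid_def by simp
    have a1: "\<bar>\<Sum>u\<in>{p..<mid}. g u\<bar> \<le> (\<Sum>t<Suc T. B t)"
      using suffix_weak[where L=L and g=g and B=B and T=T and q=mid and p=p, OF blk Bnn] dm 3 Suc.prems e1
      unfolding mid_def by (simp add: algebra_simps)
    have a2: "\<bar>\<Sum>u\<in>{mid..<q}. g u\<bar> \<le> (\<Sum>t<Suc T. B t)"
      using prefix_weak[where L=L and g=g and B=B and T=T and q=q and p=mid, OF blk Bnn] dm 3 Suc.prems e1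
      unfolding mid_def by (simp add: algebra_simps)
    have "(\<Sum>u\<in>{p..<q}. g u) = (\<Sum>u\<in>{p..<mid}. g u) + (\<Sum>u\<in>{mid..<q}. g u)"
      using 3 by (simp add: sum.atLeastLessThan_concat)
    then show ?thesis using a1 a2 mono by linarith
  qed
qed

lemma interval_bound:
  fixes g :: "nat \<Rightarrow> real" and B :: "nat \<Rightarrow> real"
  assumes blk: "\<And>t j. (j+1)*2^t \<le> L \<Longrightarrow> \<bar>\<Sum>u\<in>{j*2^t..<(j+1)*2^t}. g u\<bar> \<le> B t"
    and Bnn: "\<And>t. 0 \<le> B t"
    and "p \<le> q" "q \<le> L"
  shows "\<bar>\<Sum>u\<in>{p..<q}. g u\<bar> \<le> 2 * (\<Sum>t<Suc q. B t)"
proof -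
  have "q \<le> (0+1)*(2::nat)^q" by (simp add: less_imp_le)
  then show ?thesis using gen_window[where L=L and g=g and B=B and T=q and q=q and p=p and j=0, OF blk Bnn] assms by simp
qed



lemma vec_nz_comp: "(c::int^'d) \<noteq> 0 \<Longrightarrow> \<exists>i. c$i \<noteq> 0"
  by (metis vec_eq_iff zero_index)

lemma smult_inj: assumes "(c::int^'d) \<noteq> 0" "r *s c = r' *s c" shows "r = r'"
proof -
  obtain i where "c$i \<noteq> 0" using vec_nz_comp[OF assms(1)] by blast
  moreover have "r * c$i = r' * c$i" using assms(2) by (metis vector_smult_component)
  ultimately show ?thesis by simp
qed

lemma dotz_pos: assumes "(c::int^'d) \<noteq> 0" shows "dotz c c > 0"
proof -
  obtain i where i: "c$i \<noteq> 0" using vec_nz_comp[OF assms] by blast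
  have "0 < c$i * c$i" using i by (simp add: zero_less_mult_iff) linarith
  also have "\<dots> \<le> (\<Sum>j\<in>UNIV. c$j * c$j)"
    by (rule member_le_sum) auto
  finally show ?thesis by (simp add: dotz_def)
qed

lemma dotz_line: "dotz (x + k *s c) c = dotz x c + k * dotz c c"
  by (simp add: dotz_def algebra_simps sum.distrib sum_distrib_left)

lemma K_finite:
  assumes "(c::int^'d::finite) \<noteq> 0" "X \<subseteq> box N"
  shows "finite {k::int. x + k *s c \<in> X}"
proof -
  obtain i where i: "c$i \<noteq> 0" using vec_nz_comp[OF assms(1)] by blast
  let ?M = "\<bar>x$i\<bar> + int (N i)"
  have "{k::int. x + k *s c \<in> X} \<subseteq> {-?M..?M}"
  proof
    fix k assume "k \<in> {k::int. x + k *s c \<in> X}"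
    then have "x + k *s c \<in> box N" using assms(2) by auto
    then have h: "1 \<le> x$i + k * c$i" "x$i + k * c$i \<le> int (N i)" unfolding box_def by auto
    have c1: "1 \<le> \<bar>c$i\<bar>" using i by linarith
    have "\<bar>k\<bar> * 1 \<le> \<bar>k\<bar> * \<bar>c$i\<bar>" by (rule mult_left_mono) (use c1 in auto)
    then have "\<bar>k\<bar> \<le> \<bar>k * c$i\<bar>" by (simp add: abs_mult)
    also have "\<dots> \<le> ?M" using h by linarith
    finally show "k \<in> {-?M..?M}" by auto
  qed
  then show ?thesis using finite_subset by blast
qed

lemma set_take_drop:
  assumes "m + s \<le> length xs"
  shows "set (take s (drop m xs)) = (\<lambda>u. xs ! u) ` {m..<m+s}"
proof -
  have "take s (drop m xs) = map (\<lambda>u. xs ! u) [m..<m+s]"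
    by (rule nth_equalityI) (use assms in auto)
  then show ?thesis by simp
qed

lemma convex_nat_set:
  assumes "finite (U::nat set)" "U \<noteq> {}"
    and cv: "\<And>u1 u2 u3. u1 \<in> U \<Longrightarrow> u3 \<in> U \<Longrightarrow> u1 < u2 \<Longrightarrow> u2 < u3 \<Longrightarrow> u2 \<in> U"
  shows "U = {Min U..<Max U + 1}"
proof
  have m1: "Min U \<in> U" "Max U \<in> U" using assms(1,2) by auto
  show "U \<subseteq> {Min U..<Max U + 1}"
  proof
    fix u assume "u \<in> U"
    then have "Min U \<le> u" "u \<le> Max U" using assms(1) by auto
    then show "u \<in> {Min U..<Max U + 1}" by simp
  qed
  show "{Min U..<Max U + 1} \<subseteq> U"
  proof
    fix u assume u: "u \<in> {Min U..<Max U + 1}"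
    show "u \<in> U"
    proof (cases "u = Min U \<or> u = Max U")
      case True then show ?thesis using m1 by auto
    next
      case False
      then have "Min U < u" "u < Max U" using u by auto
      then show ?thesis using cv[OF m1(1) m1(2)] by blast
    qed
  qed
qed


theorem lemma2p1:
  fixes N :: "'d::finite \<Rightarrow> nat" and X :: "(int^'d) set"
    and b :: "nat \<Rightarrow> real" and chi :: "int^'d \<Rightarrow> int"
  assumes "\<forall>i. N i > 0"
    and "X \<subseteq> box N"
    and "\<forall>n\<ge>1. b n > 0"
    and "\<forall>x\<in>X. chi x \<in> {-1, 0, 1}"
    and "\<forall>S\<in>CX X. real_of_int \<bar>sum chi S\<bar> \<le> b (card S)"
  shows "\<forall>A\<in>AX N X. ennreal (real_of_int \<bar>sum chi A\<bar>) \<le> 2 * (\<Sum>t. ennreal (b (2^t)))"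
proof
  fix A assume "A \<in> AX N X"
  then obtain P where P: "P \<in> APs N" "A = P \<inter> X" unfolding AX_def by auto
  then obtain a c l where c: "c \<noteq> 0" and Pdef: "P = (\<lambda>i. a + int i *s c) ` {..<l}"
    unfolding APs_def by auto
  have Bnn: "\<And>t. 0 \<le> b (2^t)" using assms(3) by (simp add: less_imp_le)
  show "ennreal (real_of_int \<bar>sum chi A\<bar>) \<le> 2 * (\<Sum>t. ennreal (b (2^t)))"
  proof (cases "A = {}")
    case True then show ?thesis by simp
  next
    case False
    then obtain x where xA: "x \<in> A" by blast
    then have xX: "x \<in> X" using P by auto
    define f where "f = (\<lambda>k::int. x + k *s c)"
    define K where "K = {k. f k \<in> X}"
    have finK: "finite K" unfolding K_def f_def using K_finite[OF c assms(2)] .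
    define ks where "ks = sorted_list_of_set K"
    define xs where "xs = map f ks"
    define n where "n = length xs"
    have injf: "inj f" unfolding f_def inj_def using smult_inj[OF c] by auto
    have setks: "set ks = K" unfolding ks_def using finK by simp
    have sks: "sorted_wrt (<) ks" unfolding ks_def by (rule strict_sorted_list_of_set)
    have dks: "distinct ks" unfolding ks_def by simp
    have dxs: "distinct xs" unfolding xs_def using dks inj_on_subset[OF injf subset_UNIV] by (simp add: distinct_map)
    have fmono: "\<And>k k'. k < k' \<Longrightarrow> dotz (f k) c < dotz (f k') c"
      unfolding f_def dotz_line using dotz_pos[OF c] by simp
    have sxs: "sorted_wrt (\<lambda>u v. dotz u c < dotz v c) xs"
      unfolding xs_def sorted_wrt_map by (rule sorted_wrt_mono_rel[OF _ sks]) (rule fmono)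
    have setxs: "set xs = cong_class X c x"
    proof -
      have "set xs = f ` K" unfolding xs_def using setks by simp
      also have "\<dots> = cong_class X c x"
      proof
        show "f ` K \<subseteq> cong_class X c x"
        proof
          fix y assume "y \<in> f ` K"
          then obtain k where "k \<in> K" "y = f k" by auto
          then have "y \<in> X" "x - y = (-k) *s c" unfolding K_def f_def by (simp, simp add: vec_eq_iff)
          then show "y \<in> cong_class X c x" unfolding cong_class_def cong_mod_def by blast
        qed
        show "cong_class X c x \<subseteq> f ` K"
        proof
          fix y assume "y \<in> cong_class X c x"
          then obtain k where "y \<in> X" "x - y = k *s c" unfolding cong_class_def cong_mod_def by auto
          then have e: "y = f (-k)" unfolding f_def by (simp add: vec_eq_iff algebra_simps)
          then have "f (-k) \<in> X" using \<open>y \<in> X\<close> by simp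
          note e this
          then show "y \<in> f ` K" unfolding K_def by auto
        qed
      qed
      finally show ?thesis .
    qed
    have nthxs: "\<And>u. u < n \<Longrightarrow> xs ! u = f (ks ! u)" unfolding xs_def n_def by simp
    define g where "g = (\<lambda>u. real_of_int (chi (xs ! u)))"
    have blk: "\<And>t j. (j+1)*2^t \<le> n \<Longrightarrow> \<bar>\<Sum>u\<in>{j*2^t..<(j+1)*2^t}. g u\<bar> \<le> b (2^t)"
    proof -
      fix t j :: nat assume tj: "(j+1)*2^t \<le> n"
      define S where "S = set (take (2^t) (drop ((j + 1 - 1) * 2^t) xs))"
      have jd: "j+1 \<le> length xs div 2^t" using tj unfolding n_def by (simp add: less_eq_div_iff_mult_less_eq)
      have "c \<noteq> 0 \<and> x \<in> X \<and> distinct xs \<and> set xs = cong_class X c x \<and>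
          sorted_wrt (\<lambda>u v. dotz u c < dotz v c) xs \<and> 1 \<le> j+1 \<and> j+1 \<le> length xs div 2^t \<and>
          S = set (take (2^t) (drop ((j + 1 - 1) * 2^t) xs))"
        using c xX dxs setxs sxs jd S_def by simp
      then have "S \<in> CX X" unfolding CX_def by blast
      then have h: "real_of_int \<bar>sum chi S\<bar> \<le> b (card S)" using assms(5) by blast
      have Sim: "S = (\<lambda>u. xs ! u) ` {j*2^t..<(j+1)*2^t}"
        unfolding S_def using set_take_drop[of "j*2^t" "2^t" xs] tj n_def by (simp add: algebra_simps)
      have inj: "inj_on (\<lambda>u. xs ! u) {j*2^t..<(j+1)*2^t}"
        using inj_on_nth[OF dxs] tj n_def by auto
      have "card S = 2^t" using Sim card_image[OF inj] by simp
      moreover have "sum chi S = (\<Sum>u\<in>{j*2^t..<(j+1)*2^t}. chi (xs ! u))"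
        using Sim sum.reindex[OF inj] by simp
      moreover have "(\<Sum>u\<in>{j*2^t..<(j+1)*2^t}. g u) = real_of_int (\<Sum>u\<in>{j*2^t..<(j+1)*2^t}. chi (xs ! u))"
        unfolding g_def by simp
      ultimately show "\<bar>\<Sum>u\<in>{j*2^t..<(j+1)*2^t}. g u\<bar> \<le> b (2^t)"
        using h by simp
    qed
    define U where "U = {u. u < n \<and> xs ! u \<in> A}"
    have AU: "A = (\<lambda>u. xs ! u) ` U"
    proof
      show "(\<lambda>u. xs ! u) ` U \<subseteq> A" unfolding U_def by blast
      show "A \<subseteq> (\<lambda>u. xs ! u) ` U"
      proof
        fix y assume yA: "y \<in> A"
        have yP: "y \<in> P" and yX: "y \<in> X" using yA P(2) by auto
        obtain i where yi: "y = a + int i *s c" using yP unfolding Pdef by blast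
        have "x \<in> P" using xA P(2) by blast
        then obtain i0 where xi: "x = a + int i0 *s c" unfolding Pdef by blast
        have "x - y = (int i0 - int i) *s c" unfolding xi yi by (simp add: vec_eq_iff algebra_simps)
        then have "cong_mod c x y" unfolding cong_mod_def by blast
        then have "y \<in> cong_class X c x" using yX unfolding cong_class_def by blast
        then have "y \<in> set xs" using setxs by simp
        then obtain u where "u < n" "xs ! u = y" unfolding n_def by (auto simp: in_set_conv_nth)
        then show "y \<in> (\<lambda>u. xs ! u) ` U" unfolding U_def using yA by auto
      qed
    qed
    have finU: "finite U" unfolding U_def by simp
    have neU: "U \<noteq> {}" using AU xA by auto
    have cv: "\<And>u1 u2 u3. u1 \<in> U \<Longrightarrow> u3 \<in> U \<Longrightarrow> u1 < u2 \<Longrightarrow> u2 < u3 \<Longrightarrow> u2 \<in> U"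
    proof -
      fix u1 u2 u3 assume u: "u1 \<in> U" "u3 \<in> U" "u1 < u2" "u2 < u3"
      have n3: "u3 < n" "u2 < n" "u1 < n" using u unfolding U_def by auto
      have k12: "ks ! u1 < ks ! u2" "ks ! u2 < ks ! u3"
        using sorted_wrt_nth_less[OF sks] u n3 unfolding n_def xs_def by auto
      have "xs ! u1 \<in> P" "xs ! u3 \<in> P" using u P(2) unfolding U_def by auto
      then have "f (ks ! u1) \<in> P" "f (ks ! u3) \<in> P" using nthxs n3 by auto
      then obtain i1 i3 where i1: "i1 < l" "f (ks ! u1) = a + int i1 *s c"
        and i3: "i3 < l" "f (ks ! u3) = a + int i3 *s c" unfolding Pdef by blast
      have "(ks ! u3 - ks ! u1 + int i1) *s c = int i3 *s c"
      proof (subst vec_eq_iff, intro allI)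
        fix j
        have A: "x$j + ks!u1 * c$j = a$j + int i1 * c$j"
          using arg_cong[OF i1(2), of "\<lambda>v. v$j"] unfolding f_def by simp
        have B: "x$j + ks!u3 * c$j = a$j + int i3 * c$j"
          using arg_cong[OF i3(2), of "\<lambda>v. v$j"] unfolding f_def by simp
        have "(ks ! u3 - ks ! u1 + int i1) * c$j = ks!u3 * c$j - ks!u1 * c$j + int i1 * c$j"
          by (simp add: algebra_simps)
        then show "((ks ! u3 - ks ! u1 + int i1) *s c) $ j = (int i3 *s c) $ j" using A B by simp
      qed
      then have e3: "ks ! u3 - ks ! u1 + int i1 = int i3" using smult_inj[OF c] by blast
      define i2 where "i2 = nat (ks ! u2 - ks ! u1 + int i1)"
      have i2l: "i2 < l" using e3 k12 i3(1) unfolding i2_def by linarith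
      have i2e: "int i2 = ks ! u2 - ks ! u1 + int i1" unfolding i2_def using k12 by simp
      have "f (ks ! u2) = a + int i2 *s c"
      proof (subst vec_eq_iff, intro allI)
        fix j
        have A: "x$j + ks!u1 * c$j = a$j + int i1 * c$j"
          using arg_cong[OF i1(2), of "\<lambda>v. v$j"] unfolding f_def by simp
        have "(ks ! u2 - ks ! u1 + int i1) * c$j = ks!u2 * c$j - ks!u1 * c$j + int i1 * c$j"
          by (simp add: algebra_simps)
        then show "f (ks ! u2) $ j = (a + int i2 *s c) $ j" using A i2e unfolding f_def by simp
      qed
      then have "f (ks ! u2) \<in> P" using Pdef i2l by auto
      moreover have "f (ks ! u2) \<in> X" using setks n3 unfolding K_def n_def xs_def by (auto simp: nth_mem)
      ultimately show "u2 \<in> U" unfolding U_def using n3 nthxs P by auto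
    qed
    define p where "p = Min U"
    define q where "q = Max U + 1"
    have Upq: "U = {p..<q}" unfolding p_def q_def using convex_nat_set[OF finU neU cv] .
    have MU: "Max U \<in> U" using finU neU by simp
    have Ult: "\<forall>u\<in>U. u < length xs" unfolding U_def n_def by blast
    have "Max U < n" using MU Ult n_def by blast
    then have qn: "q \<le> n" unfolding q_def by simp
    have "p \<le> Max U" unfolding p_def using finU neU by simp
    then have pq: "p \<le> q" "q \<le> n" using qn unfolding q_def by simp_all
    have injU: "inj_on (\<lambda>u. xs ! u) U" using inj_on_nth[OF dxs Ult] .
    have sA0: "sum chi A = (\<Sum>u\<in>{p..<q}. chi (xs ! u))"
      unfolding AU using sum.reindex[OF injU] Upq by simp
    have sA: "real_of_int (sum chi A) = (\<Sum>u\<in>{p..<q}. g u)"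
      unfolding sA0 g_def by simp
    have bnd: "\<bar>\<Sum>u\<in>{p..<q}. g u\<bar> \<le> 2 * (\<Sum>t<Suc q. b (2^t))"
      using interval_bound[where L=n and g=g and B="\<lambda>t. b (2^t)", OF blk Bnn pq] by simp
    have "ennreal (real_of_int \<bar>sum chi A\<bar>) \<le> ennreal (2 * (\<Sum>t<Suc q. b (2^t)))"
      using bnd sA by (intro ennreal_leI) simp
    also have "\<dots> = 2 * (\<Sum>t<Suc q. ennreal (b (2^t)))"
      using Bnn by (simp add: ennreal_mult sum_ennreal sum_nonneg)
    also have "\<dots> \<le> 2 * (\<Sum>t. ennreal (b (2^t)))"
      by (intro mult_left_mono sum_le_suminf summableI) auto
    finally show ?thesis .
  qed
qed

end
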